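(* Let $\mathbf u$ be an infinite word over a finite alphabet whose language is closed under reversal. The following are equivalent: (1) the defect $D(\mathbf u)$ is finite; (2) there exists an integer $H$ such that for every prefix $w$ of $\mathbf u$ with $|w|\ge H$, the longest palindromic suffix of $w$ occurs in $w$ exactly once.
   Context: For a finite word $w=w_0\cdots w_{n-1}$ its reversal is $\overline{w}=w_{n-1}\cdots w_0$; $w$ is a palindrome if $w=\overline{w}$ (the empty word is a palindrome). The language of $\mathbf u$ is closed under reversal if every factor's reversal is also a factor. The defect of a finite word $w$ is $D(w)=|w|+1-(\text{number of distinct palindromic factors of } w, \text{ including the empty word})$. The defect of an infinite word is $D(\mathbf u)=\sup\{D(w): w \text{ a prefix of } \mathbf u\}$ (possibly $+\infty$). *)

theory Defs
  imports Main "HOL-Library.Sublist" "HOL-Library.Extended_Nat"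
begin

definition palindrome :: "'a list \<Rightarrow> bool" where
  "palindrome w \<longleftrightarrow> rev w = w"

definition factor_of :: "'a list \<Rightarrow> (nat \<Rightarrow> 'a) \<Rightarrow> bool" where
  "factor_of w u \<longleftrightarrow> (\<exists>i. w = map u [i..<i + length w])"

definition closed_under_reversal :: "(nat \<Rightarrow> 'a) \<Rightarrow> bool" where
  "closed_under_reversal u \<longleftrightarrow> (\<forall>w. factor_of w u \<longrightarrow> factor_of (rev w) u)"

definition pref :: "(nat \<Rightarrow> 'a) \<Rightarrow> nat \<Rightarrow> 'a list" where
  "pref u n = map u [0..<n]"

text \<open>Palindromic factors of a finite word (contiguous factors, including the empty word).\<close>
definition pal_factors :: "'a list \<Rightarrow> 'a list set" where
  "pal_factors w = {p. sublist p w \<and> palindrome p}"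

definition defect :: "'a list \<Rightarrow> nat" where
  "defect w = length w + 1 - card (pal_factors w)"

definition defect_inf :: "(nat \<Rightarrow> 'a) \<Rightarrow> enat" where
  "defect_inf u = (SUP n. enat (defect (pref u n)))"

definition lps :: "'a list \<Rightarrow> 'a list" where
  "lps w = drop (LEAST k. palindrome (drop k w)) w"

definition occ :: "'a list \<Rightarrow> 'a list \<Rightarrow> nat" where
  "occ p w = card {i. i + length p \<le> length w \<and> take (length p) (drop i w) = p}"

end

theory Submission
  imports Defs
begin

lemma finite_pal: "finite (pal_factors w)"
proof -
  have "pal_factors w \<subseteq> set (sublists w)" by (auto simp: pal_factors_def)
  thus ?thesis by (rule finite_subset) simp
qed

lemma lps_ex: "\<exists>k. palindrome (drop k w)"
  by (rule exI[of _ "length w"]) (simp add: palindrome_def)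

lemma lps_pal: "palindrome (lps w)"
  unfolding lps_def by (rule LeastI_ex[OF lps_ex])

lemma lps_suffix: "suffix (lps w) w"
  unfolding lps_def by (rule suffix_drop)

lemma lps_longest:
  assumes "suffix s w" "palindrome s"
  shows "length s \<le> length (lps w)"
proof -
  from assms(1) obtain x where w: "w = x @ s" by (auto simp: suffix_def)
  have "drop (length x) w = s" using w by simp
  hence "(LEAST k. palindrome (drop k w)) \<le> length x"
    using assms(2) by (intro Least_le) simp
  thus ?thesis unfolding lps_def using w by simp
qed

lemma key:
  assumes "suffix s (w @ [a])" "palindrome s" "s \<noteq> lps (w @ [a])"
  shows "sublist s w"
proof -
  let ?p = "lps (w @ [a])"
  have ls: "length s \<le> length ?p" using lps_longest assms by blast
  have "length s \<noteq> length ?p"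
  proof
    assume "length s = length ?p"
    then have "suffix s ?p" "suffix ?p s"
      using suffix_length_suffix[OF assms(1) lps_suffix[of "w @ [a]"]]
        suffix_length_suffix[OF lps_suffix[of "w @ [a]"] assms(1)]
      by simp_all
    then show False using assms(3) suffix_order.antisym by metis
  qed
  with ls have lt: "length s < length ?p" by simp
  have "suffix s ?p" using suffix_length_suffix[OF assms(1) lps_suffix[of "w @ [a]"] ls] .
  then obtain t where pt: "?p = t @ s" by (auto simp: suffix_def)
  have "rev ?p = rev s @ rev t" using pt by simp
  hence p2: "?p = s @ rev t" using lps_pal[of "w @ [a]"] assms(2) by (simp add: palindrome_def)
  obtain x where wx: "w @ [a] = x @ ?p" using lps_suffix by (metis suffix_def)
  have "rev t \<noteq> []" using lt p2 by auto
  then obtain t' b where "rev t = t' @ [b]" by (metis rev_exhaust)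
  with wx p2 have "w @ [a] = (x @ s @ t') @ [b]" by simp
  hence "w = x @ s @ t'" by simp
  thus ?thesis unfolding sublist_def by blast
qed

lemma pal_snoc:
  "pal_factors (w @ [a]) = insert (lps (w @ [a])) (pal_factors w)"
proof
  show "pal_factors (w @ [a]) \<subseteq> insert (lps (w @ [a])) (pal_factors w)"
  proof
    fix q assume "q \<in> pal_factors (w @ [a])"
    hence q: "sublist q (w @ [a])" "palindrome q" by (auto simp: pal_factors_def)
    show "q \<in> insert (lps (w @ [a])) (pal_factors w)"
    proof (cases "sublist q w")
      case True thus ?thesis using q by (simp add: pal_factors_def)
    next
      case False
      have d: "suffix q (w @ [a]) \<or> sublist q w" using iffD1[OF sublist_snoc q(1)] .
      have "suffix q (w @ [a])" using d False by (elim disjE) simp_all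
      show ?thesis
      proof (cases "q = lps (w @ [a])")
        case True thus ?thesis by simp
      next
        case F: False
        have "sublist q w" by (rule key[OF \<open>suffix q (w @ [a])\<close> q(2) F])
        thus ?thesis using False by simp
      qed
    qed
  qed
next
  show "insert (lps (w @ [a])) (pal_factors w) \<subseteq> pal_factors (w @ [a])"
  proof
    fix q assume "q \<in> insert (lps (w @ [a])) (pal_factors w)"
    then consider "q = lps (w @ [a])" | "q \<in> pal_factors w" by blast
    then show "q \<in> pal_factors (w @ [a])"
    proof cases
      case 1
      have "sublist q (w @ [a])" using 1 lps_suffix[of "w @ [a]"] suffix_imp_sublist by blast
      thus ?thesis using 1 lps_pal[of "w @ [a]"] by (simp add: pal_factors_def)
    next
      case 2
      hence "sublist q w" "palindrome q" by (auto simp: pal_factors_def)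
      moreover have "sublist w (w @ [a])" by (rule sublist_append_rightI)
      ultimately show ?thesis unfolding pal_factors_def using sublist_order.order_trans by blast
    qed
  qed
qed

lemma occ_pos: "occ p w \<ge> 1 \<longleftrightarrow> sublist p w"
proof -
  have fin: "finite {i. i + length p \<le> length w \<and> take (length p) (drop i w) = p}"
    by (rule finite_subset[of _ "{..length w}"]) auto
  have "occ p w \<ge> 1 \<longleftrightarrow> (\<exists>i. i + length p \<le> length w \<and> take (length p) (drop i w) = p)"
    unfolding occ_def using fin by (simp add: Suc_le_eq card_gt_0_iff)
  also have "\<dots> \<longleftrightarrow> sublist p w"
  proof
    assume "\<exists>i. i + length p \<le> length w \<and> take (length p) (drop i w) = p"
    then obtain i where "take (length p) (drop i w) = p" by blast
    moreover have "w = take i w @ take (length p) (drop i w) @ drop (length p) (drop i w)"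
      by (simp only: append_take_drop_id)
    ultimately show "sublist p w" unfolding sublist_def by metis
  next
    assume "sublist p w"
    then obtain ps ss where "w = ps @ p @ ss" by (auto simp: sublist_def)
    thus "\<exists>i. i + length p \<le> length w \<and> take (length p) (drop i w) = p"
      by (intro exI[of _ "length ps"]) simp
  qed
  finally show ?thesis .
qed

lemma occ_snoc:
  assumes "suffix p (w @ [a])"
  shows "occ p (w @ [a]) = Suc (occ p w)"
proof -
  let ?S = "{i. i + length p \<le> length w \<and> take (length p) (drop i w) = p}"
  let ?S' = "{i. i + length p \<le> length (w @ [a]) \<and> take (length p) (drop i (w @ [a])) = p}"
  from assms obtain x where wx: "w @ [a] = x @ p" by (auto simp: suffix_def)
  have lp: "length p \<le> Suc (length w)" using wx by (metis length_append_singleton le_add2 length_append)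
  let ?j = "Suc (length w) - length p"
  have jx: "?j = length x" using wx by (metis add_diff_cancel_right' length_append length_append_singleton)
  have "?S' = insert ?j ?S"
  proof (intro set_eqI iffI)
    fix i assume "i \<in> ?S'"
    hence i: "i + length p \<le> Suc (length w)" "take (length p) (drop i (w @ [a])) = p" by auto
    show "i \<in> insert ?j ?S"
    proof (cases "i + length p \<le> length w")
      case True
      hence "take (length p) (drop i (w @ [a])) = take (length p) (drop i w)" by simp
      thus ?thesis using i True by simp
    next
      case False thus ?thesis using i by simp
    qed
  next
    fix i assume "i \<in> insert ?j ?S"
    thus "i \<in> ?S'"
    proof
      assume "i = ?j" thus ?thesis using jx wx lp by (simp del: append_assoc)
    next
      assume "i \<in> ?S"
      thus ?thesis by simp
    qed
  qed
  moreover have "?j \<notin> ?S" using lp by simp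
  moreover have "finite ?S" by (rule finite_subset[of _ "{..length w}"]) auto
  ultimately show ?thesis unfolding occ_def by simp
qed

lemma card_snoc:
  "card (pal_factors (w @ [a])) = card (pal_factors w) +
     (if occ (lps (w @ [a])) (w @ [a]) = 1 then 1 else 0)"
proof -
  have "lps (w @ [a]) \<in> pal_factors w \<longleftrightarrow> sublist (lps (w @ [a])) w"
    using lps_pal by (auto simp: pal_factors_def)
  also have "\<dots> \<longleftrightarrow> occ (lps (w @ [a])) (w @ [a]) \<noteq> 1"
    using occ_pos[of "lps (w @ [a])" w] occ_snoc[OF lps_suffix[of "w @ [a]"]] by auto
  finally have eq: "lps (w @ [a]) \<in> pal_factors w \<longleftrightarrow> occ (lps (w @ [a])) (w @ [a]) \<noteq> 1" .
  show ?thesis unfolding pal_snoc using eq finite_pal[of w] by (auto simp: card_insert_if)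
qed

theorem corollary3:
  fixes u :: "nat \<Rightarrow> 'a::finite"
  assumes "closed_under_reversal u"
  shows "defect_inf u \<noteq> \<infinity> \<longleftrightarrow>
         (\<exists>H::nat. \<forall>n\<ge>H. occ (lps (pref u n)) (pref u n) = 1)"
proof -
  define e where "e n = (occ (lps (pref u n)) (pref u n) = 1)" for n
  define c where "c n = card (pal_factors (pref u n))" for n
  define D where "D n = defect (pref u n)" for n
  have ps: "pref u (Suc n) = pref u n @ [u n]" for n by (simp add: pref_def)
  have c0: "c 0 = 1"
  proof -
    have p: "pal_factors [] = {[]}" by (auto simp: pal_factors_def palindrome_def)
    have e: "pref u 0 = []" by (simp add: pref_def)
    show ?thesis by (simp only: c_def e p) simp
  qed
  have cS: "c (Suc n) = c n + (if e (Suc n) then 1 else 0)" for n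
    unfolding c_def e_def ps by (rule card_snoc)
  have cle: "c n \<le> n + 1" for n
    by (induction n) (auto simp: c0 cS)
  have DS: "D (Suc n) = D n + (if e (Suc n) then 0 else 1)" for n
  proof -
    have "D m = m + 1 - c m" for m unfolding D_def defect_def c_def by (simp add: pref_def)
    thus ?thesis using cle[of n] cS[of n] by simp
  qed
  have monoD: "incseq D" by (rule incseq_SucI) (simp add: DS)
  have "defect_inf u \<noteq> \<infinity> \<longleftrightarrow> (\<exists>B. \<forall>n. D n \<le> B)"
  proof
    assume h: "defect_inf u \<noteq> \<infinity>"
    then obtain B where B: "defect_inf u = enat B" by (cases "defect_inf u") auto
    have "enat (D n) \<le> defect_inf u" for n unfolding defect_inf_def D_def by (rule SUP_upper) simp
    thus "\<exists>B. \<forall>n. D n \<le> B" using B by auto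
  next
    assume "\<exists>B. \<forall>n. D n \<le> B"
    then obtain B where "\<forall>n. D n \<le> B" by blast
    hence "defect_inf u \<le> enat B" unfolding defect_inf_def D_def by (intro SUP_least) simp
    thus "defect_inf u \<noteq> \<infinity>" by (metis enat_ord_simps(3) infinity_ileE)
  qed
  also have "\<dots> \<longleftrightarrow> (\<exists>H. \<forall>n\<ge>H. e n)"
  proof
    assume "\<exists>B. \<forall>n. D n \<le> B"
    then obtain B where B: "\<forall>n. D n \<le> B" by blast
    show "\<exists>H. \<forall>n\<ge>H. e n"
    proof (rule ccontr)
      assume "\<not> ?thesis"
      hence nh: "\<forall>H. \<exists>n\<ge>H. \<not> e n" by blast
      have "\<exists>n. D n \<ge> m" for m
      proof (induction m)
        case 0 show ?case by simp
      next
        case (Suc m)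
        then obtain n where n: "D n \<ge> m" by blast
        obtain n' where n': "n' \<ge> Suc n" "\<not> e n'" using nh by blast
        then obtain k where k: "n' = Suc k" "k \<ge> n" by (cases n') auto
        have "D n' = D k + 1" using DS[of k] k n' by simp
        moreover have "D n \<le> D k" using monoD k by (simp add: incseq_def)
        ultimately show ?case using n by (intro exI[of _ n']) simp
      qed
      thus False using B by (meson not_less_eq_eq)
    qed
  next
    assume "\<exists>H. \<forall>n\<ge>H. e n"
    then obtain H where H: "\<forall>n\<ge>H. e n" by blast
    have "D n \<le> D H" for n
    proof (cases "n \<le> H")
      case True thus ?thesis using monoD by (simp add: incseq_def)
    next
      case False
      hence "H \<le> n" by simp
      thus ?thesis
      proof (induction n rule: dec_induct)
        case base show ?case by simp
      next
        case (step k) thus ?case using DS[of k] H by simp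
      qed
    qed
    thus "\<exists>B. \<forall>n. D n \<le> B" by blast
  qed
  finally show ?thesis unfolding e_def .
qed

end
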